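(* Let $A \subseteq \mathbb{N}$ be a normal set. Then there exist $x,y,z \in A$ with $x \neq y$ such that $xy = z^2$.
   Context: $\mathbb{N} = \{1,2,3,\dots\}$. An infinite binary sequence $(\lambda_i)_{i \ge 1}$ is called normal if every finite binary word $\omega$ of length $|\omega|$ occurs in the sequence with asymptotic frequency $2^{-|\omega|}$, i.e. the number of $i \le N$ with $(\lambda_i,\dots,\lambda_{i+|\omega|-1}) = \omega$, divided by $N$, tends to $2^{-|\omega|}$ as $N \to \infty$. A set $B \subseteq \mathbb{N}$ is called normal if its indicator sequence ($\lambda_i = 1$ iff $i \in B$) is normal. *)

theory Defs
  imports Complex_Main
begin

text \<open>Binary sequences are indexed from 1: only the values at positive indices matter.\<close>

definition occurs_at :: "(nat \<Rightarrow> bool) \<Rightarrow> bool list \<Rightarrow> nat \<Rightarrow> bool" where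
  "occurs_at lam w i \<longleftrightarrow> (\<forall>j < length w. lam (i + j) = w ! j)"

definition normal_seq :: "(nat \<Rightarrow> bool) \<Rightarrow> bool" where
  "normal_seq lam \<longleftrightarrow>
     (\<forall>w :: bool list.
        (\<lambda>N. real (card {i \<in> {1..N}. occurs_at lam w i}) / real N)
          \<longlonglongrightarrow> (1 / 2) ^ length w)"

definition normal_set :: "nat set \<Rightarrow> bool" where
  "normal_set B \<longleftrightarrow> normal_seq (\<lambda>i. i \<in> B)"

end

theory Submission
  imports Defs
begin

definition apfree :: "nat set \<Rightarrow> bool" where
  "apfree B \<longleftrightarrow> (\<forall>a d. 0 < d \<longrightarrow> a \<in> B \<longrightarrow> a + d \<in> B \<longrightarrow> a + 2*d \<in> B \<longrightarrow> False)"

lemma case8: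
 fixes P :: "nat \<Rightarrow> bool" shows
 "(\<not> (P 0 \<and> P 1 \<and> P 2)) \<Longrightarrow> (\<not> (P 1 \<and> P 2 \<and> P 3)) \<Longrightarrow> (\<not> (P 2 \<and> P 3 \<and> P 4)) \<Longrightarrow>
 (\<not> (P 3 \<and> P 4 \<and> P 5)) \<Longrightarrow> (\<not> (P 4 \<and> P 5 \<and> P 6)) \<Longrightarrow> (\<not> (P 5 \<and> P 6 \<and> P 7)) \<Longrightarrow>
 (\<not> (P 0 \<and> P 2 \<and> P 4)) \<Longrightarrow> (\<not> (P 1 \<and> P 3 \<and> P 5)) \<Longrightarrow> (\<not> (P 2 \<and> P 4 \<and> P 6)) \<Longrightarrow>
 (\<not> (P 3 \<and> P 5 \<and> P 7)) \<Longrightarrow> (\<not> (P 0 \<and> P 3 \<and> P 6)) \<Longrightarrow> (\<not> (P 1 \<and> P 4 \<and> P 7)) \<Longrightarrow>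
 (if P 0 then 1 else 0) + (if P 1 then 1 else 0)
     + (if P 2 then 1 else 0) + (if P 3 then 1 else 0) + (if P 4 then 1 else 0) + (if P 5 then 1 else 0)
     + (if P 6 then 1 else 0) + (if P 7 then 1 else 0) \<le> (4::nat)"
  by (cases "P 0"; cases "P 1"; cases "P 2"; cases "P 3"; cases "P 4"; cases "P 5"; cases "P 6"; cases "P 7"; simp)

lemma card8_aux:
  fixes P :: "nat \<Rightarrow> bool"
  assumes "\<And>i d. 0 < d \<Longrightarrow> i + 2*d < 8 \<Longrightarrow> P i \<Longrightarrow> P (i+d) \<Longrightarrow> P (i+2*d) \<Longrightarrow> False"
  shows "(\<Sum>i<8. (if P i then 1 else 0::nat)) \<le> 4"
proof -
  have h: "\<And>i d. 0 < d \<Longrightarrow> i + 2*d < 8 \<Longrightarrow> \<not> (P i \<and> P (i+d) \<and> P (i+2*d))" using assms by blast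
  have c0: "\<not> (P 0 \<and> P 1 \<and> P 2)" using h[where i=0 and d=1] by (simp add: numeral_eq_Suc)
  have c1: "\<not> (P 1 \<and> P 2 \<and> P 3)" using h[where i=1 and d=1] by (simp add: numeral_eq_Suc)
  have c2: "\<not> (P 2 \<and> P 3 \<and> P 4)" using h[where i=2 and d=1] by (simp add: numeral_eq_Suc)
  have c3: "\<not> (P 3 \<and> P 4 \<and> P 5)" using h[where i=3 and d=1] by (simp add: numeral_eq_Suc)
  have c4: "\<not> (P 4 \<and> P 5 \<and> P 6)" using h[where i=4 and d=1] by (simp add: numeral_eq_Suc)
  have c5: "\<not> (P 5 \<and> P 6 \<and> P 7)" using h[where i=5 and d=1] by (simp add: numeral_eq_Suc)
  have c6: "\<not> (P 0 \<and> P 2 \<and> P 4)" using h[where i=0 and d=2] by (simp add: numeral_eq_Suc)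
  have c7: "\<not> (P 1 \<and> P 3 \<and> P 5)" using h[where i=1 and d=2] by (simp add: numeral_eq_Suc)
  have c8: "\<not> (P 2 \<and> P 4 \<and> P 6)" using h[where i=2 and d=2] by (simp add: numeral_eq_Suc)
  have c9: "\<not> (P 3 \<and> P 5 \<and> P 7)" using h[where i=3 and d=2] by (simp add: numeral_eq_Suc)
  have c10: "\<not> (P 0 \<and> P 3 \<and> P 6)" using h[where i=0 and d=3] by (simp add: numeral_eq_Suc)
  have c11: "\<not> (P 1 \<and> P 4 \<and> P 7)" using h[where i=1 and d=3] by (simp add: numeral_eq_Suc)
  have e: "(\<Sum>i<8. (if P i then 1 else 0::nat)) = (if P 0 then 1 else 0) + (if P 1 then 1 else 0)
     + (if P 2 then 1 else 0) + (if P 3 then 1 else 0) + (if P 4 then 1 else 0) + (if P 5 then 1 else 0)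
     + (if P 6 then 1 else 0) + (if P 7 then 1 else 0)"
    by (simp add: numeral_eq_Suc lessThan_Suc)
  show ?thesis unfolding e by (rule case8[OF c0 c1 c2 c3 c4 c5 c6 c7 c8 c9 c10 c11])
qed

lemma card_window8:
  assumes "apfree B"
  shows "card (B \<inter> {a..<a+8}) \<le> 4"
proof -
  have "B \<inter> {a..<a+8} = (\<lambda>i. a + i) ` {i. i < 8 \<and> a + i \<in> B}"
  proof safe
    fix x assume "x \<in> B" "x \<in> {a..<a+8}"
    then show "x \<in> (\<lambda>i. a + i) ` {i. i < 8 \<and> a + i \<in> B}"
      by (intro image_eqI[where x="x-a"]) auto
  qed auto
  hence "card (B \<inter> {a..<a+8}) = card {i. i < 8 \<and> a + i \<in> B}"
    by (simp add: card_image inj_on_def)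
  also have "{i. i < 8 \<and> a + i \<in> B} = {i \<in> {..<8}. a + i \<in> B}" by auto
  also have "card \<dots> = (\<Sum>i<8. (if a + i \<in> B then 1 else 0::nat))"
    by (simp add: sum.inter_filter[symmetric])
  also have "\<dots> \<le> 4"
  proof (rule card8_aux)
    fix i d :: nat assume h: "0 < d" "i + 2*d < 8" "a + i \<in> B" "a + (i + d) \<in> B" "a + (i + 2*d) \<in> B"
    have "(a+i)+d \<in> B" "(a+i)+2*d \<in> B" using h by (simp_all add: add.assoc)
    thus False using assms h(1,3) unfolding apfree_def by blast
  qed
  finally show ?thesis .
qed

lemma card_split: "(a::nat) \<le> b \<Longrightarrow> b \<le> c \<Longrightarrow> card (B \<inter> {a..<c}) = card (B \<inter> {a..<b}) + card (B \<inter> {b..<c})"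
proof -
  assume "a \<le> b" "b \<le> c"
  hence "B \<inter> {a..<c} = (B \<inter> {a..<b}) \<union> (B \<inter> {b..<c})" by (auto simp: atLeastLessThan_iff not_le)
  moreover have "(B \<inter> {a..<b}) \<inter> (B \<inter> {b..<c}) = {}" by auto
  ultimately show ?thesis by (simp add: card_Un_disjoint)
qed

lemma card_single: "card (B \<inter> {a..<Suc a}) = (if a \<in> B then 1 else 0)"
proof -
  have "B \<inter> {a..<Suc a} = (if a \<in> B then {a} else {})" by auto
  thus ?thesis by simp
qed

lemma apfree17:
  assumes "apfree B" "B \<subseteq> {..<17}"
  shows "card B \<le> 8"
proof -
  have B: "B = B \<inter> {0..<17}" using assms(2) by auto
  have w0: "card (B \<inter> {0..<8}) \<le> 4" using card_window8[OF assms(1), of 0] by simp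
  have w1: "card (B \<inter> {1..<9}) \<le> 4" using card_window8[OF assms(1), of 1] by simp
  have w8: "card (B \<inter> {8..<16}) \<le> 4" using card_window8[OF assms(1), of 8] by simp
  have w9: "card (B \<inter> {9..<17}) \<le> 4" using card_window8[OF assms(1), of 9] by simp
  have s1: "card (B \<inter> {0..<17}) = card (B \<inter> {0..<1}) + card (B \<inter> {1..<8}) + card (B \<inter> {8..<9})
     + card (B \<inter> {9..<16}) + card (B \<inter> {16..<17})"
    using card_split[of 0 1 17 B] card_split[of 1 8 17 B] card_split[of 8 9 17 B] card_split[of 9 16 17 B] by simp
  have s2: "card (B \<inter> {0..<8}) = card (B \<inter> {0..<1}) + card (B \<inter> {1..<8})" using card_split[of 0 1 8 B] by simp
  have s3: "card (B \<inter> {1..<9}) = card (B \<inter> {1..<8}) + card (B \<inter> {8..<9})" using card_split[of 1 8 9 B] by simp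
  have s4: "card (B \<inter> {8..<16}) = card (B \<inter> {8..<9}) + card (B \<inter> {9..<16})" using card_split[of 8 9 16 B] by simp
  have s5: "card (B \<inter> {9..<17}) = card (B \<inter> {9..<16}) + card (B \<inter> {16..<17})" using card_split[of 9 16 17 B] by simp
  have c0: "card (B \<inter> {0..<1}) = (if 0 \<in> B then 1 else 0)" using card_single[of B 0] by (simp add: numeral_eq_Suc)
  have c8: "card (B \<inter> {8..<9}) = (if 8 \<in> B then 1 else 0)" using card_single[of B 8] by (simp add: numeral_eq_Suc)
  have c16: "card (B \<inter> {16..<17}) = (if 16 \<in> B then 1 else 0)" using card_single[of B 16] by (simp add: numeral_eq_Suc)
  have no: "\<not> (0 \<in> B \<and> 8 \<in> B \<and> 16 \<in> B)"
  proof
    assume h: "0 \<in> B \<and> 8 \<in> B \<and> 16 \<in> B"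
    have "0 < (8::nat) \<longrightarrow> 0 \<in> B \<longrightarrow> 0 + 8 \<in> B \<longrightarrow> 0 + 2*8 \<in> B \<longrightarrow> False"
      using assms(1) unfolding apfree_def by blast
    thus False using h by simp
  qed
  show ?thesis
  proof (rule ccontr)
    assume "\<not> card B \<le> 8"
    hence t: "card (B \<inter> {0..<17}) \<ge> 9" using B by simp
    have i8: "8 \<in> B"
    proof (rule ccontr)
      assume "8 \<notin> B" hence "card (B \<inter> {8..<9}) = 0" using c8 by simp
      thus False using t s1 s2 s5 w0 w9 by linarith
    qed
    hence c8': "card (B \<inter> {8..<9}) = 1" using c8 by simp
    have i0: "0 \<in> B"
    proof (rule ccontr)
      assume "0 \<notin> B" hence "card (B \<inter> {0..<1}) = 0" using c0 by simp
      thus False using t s1 s3 s5 w1 w9 c8' by linarith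
    qed
    have i16: "16 \<in> B"
    proof (rule ccontr)
      assume "16 \<notin> B" hence "card (B \<inter> {16..<17}) = 0" using c16 by simp
      thus False using t s1 s2 s4 w0 w8 c8' by linarith
    qed
    show False using no i0 i8 i16 by blast
  qed
qed


definition Xb :: "bool \<Rightarrow> real" where "Xb b = (if b then 1 else 0) - 1/2"

definition wd :: "(nat \<Rightarrow> bool) \<Rightarrow> nat \<Rightarrow> nat \<Rightarrow> bool list" where
  "wd lam R i = map (\<lambda>j. lam (i + j)) [0..<R]"

lemma Xb_not: "Xb (\<not> b) = - Xb b" by (simp add: Xb_def)
lemma Xb_sq: "Xb b * Xb b = 1/4" by (simp add: Xb_def)

lemma length_wd [simp]: "length (wd lam R i) = R" by (simp add: wd_def)

lemma nth_wd: "j < R \<Longrightarrow> wd lam R i ! j = lam (i + j)" by (simp add: wd_def)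

lemma occurs_iff: "length W = R \<Longrightarrow> occurs_at lam W i \<longleftrightarrow> W = wd lam R i"
  by (auto simp: occurs_at_def wd_def list_eq_iff_nth_eq)

lemma finite_LR: "finite {W :: bool list. length W = R}"
  by (rule finite_list_length)

lemma card_LR: "card {W :: bool list. length W = R} = 2 ^ R"
  using card_lists_length_eq[of "UNIV :: bool set" R] by simp

lemma flip_sum:
  assumes "i < R" "j < R" "i \<noteq> j"
  shows "(\<Sum>W\<in>{W :: bool list. length W = R}. Xb (W!i) * Xb (W!j)) = 0"
proof -
  let ?S = "{W :: bool list. length W = R}"
  let ?f = "\<lambda>W::bool list. W[i := \<not> W!i]"
  have "(\<Sum>W\<in>?S. - (Xb (W!i) * Xb (W!j))) = (\<Sum>W\<in>?S. Xb (W!i) * Xb (W!j))"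
  proof (rule sum.reindex_bij_witness[of _ ?f ?f])
    fix W :: "bool list" assume "W \<in> ?S"
    thus "?f (?f W) = W" using assms by (auto simp: list_eq_iff_nth_eq nth_list_update)
    show "?f W \<in> ?S" using \<open>W \<in> ?S\<close> by simp
    show "Xb (?f W ! i) * Xb (?f W ! j) = - (Xb (W!i) * Xb (W!j))"
      using \<open>W \<in> ?S\<close> assms by (simp add: nth_list_update Xb_not)
  next
    fix W :: "bool list" assume "W \<in> ?S"
    thus "?f (?f W) = W" using assms by (auto simp: list_eq_iff_nth_eq nth_list_update)
    show "?f W \<in> ?S" using \<open>W \<in> ?S\<close> by simp
  qed
  thus ?thesis by (simp add: sum_negf)
qed

lemma sq_sum:
  fixes p :: "nat \<Rightarrow> nat"
  assumes inj: "inj_on p {..<r}" and lt: "\<And>s. s < r \<Longrightarrow> p s < R"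
  shows "(\<Sum>W\<in>{W :: bool list. length W = R}. (\<Sum>s<r. Xb (W!(p s)))^2) = real r * 2 ^ R / 4"
proof -
  let ?S = "{W :: bool list. length W = R}"
  have "(\<Sum>W\<in>?S. (\<Sum>s<r. Xb (W!(p s)))^2) = (\<Sum>W\<in>?S. \<Sum>s<r. \<Sum>s'<r. Xb (W!(p s)) * Xb (W!(p s')))"
    by (simp add: power2_eq_square sum_product)
  also have "\<dots> = (\<Sum>s<r. \<Sum>s'<r. \<Sum>W\<in>?S. Xb (W!(p s)) * Xb (W!(p s')))"
    by (simp add: sum.swap[of _ ?S] sum.swap[of _ ?S "{..<r}"])
  also have "\<dots> = (\<Sum>s<r. (2::real) ^ R / 4)"
  proof (rule sum.cong[OF refl])
    fix s assume s: "s \<in> {..<r}"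
    have "(\<Sum>s'<r. \<Sum>W\<in>?S. Xb (W!(p s)) * Xb (W!(p s'))) = (\<Sum>s'\<in>{s}. \<Sum>W\<in>?S. Xb (W!(p s)) * Xb (W!(p s')))"
    proof (rule sum.mono_neutral_right)
      show "finite {..<r}" by simp
      show "{s} \<subseteq> {..<r}" using s by simp
      show "\<forall>i\<in>{..<r} - {s}. (\<Sum>W\<in>?S. Xb (W ! p s) * Xb (W ! p i)) = 0"
      proof
        fix i assume "i \<in> {..<r} - {s}"
        hence "p s \<noteq> p i" "p i < R" "p s < R" using inj s lt by (auto simp: inj_on_def)
        thus "(\<Sum>W\<in>?S. Xb (W ! p s) * Xb (W ! p i)) = 0" using flip_sum by blast
      qed
    qed
    also have "\<dots> = (\<Sum>W\<in>?S. 1/4)" by (simp add: Xb_sq)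
    also have "\<dots> = 2 ^ R / 4" using card_LR[of R] by simp
    finally show "(\<Sum>s'<r. \<Sum>W\<in>?S. Xb (W!(p s)) * Xb (W!(p s'))) = 2 ^ R / 4" .
  qed
  also have "\<dots> = real r * 2 ^ R / 4" by simp
  finally show ?thesis .
qed


lemma group_sum:
  fixes g :: "bool list \<Rightarrow> real"
  shows "(\<Sum>i\<in>{1..N}. g (wd lam R i)) =
         (\<Sum>W\<in>{W :: bool list. length W = R}. g W * real (card {i \<in> {1..N}. occurs_at lam W i}))"
proof -
  let ?S = "{W :: bool list. length W = R}"
  have "(\<Sum>W\<in>?S. g W * real (card {i \<in> {1..N}. occurs_at lam W i}))
      = (\<Sum>W\<in>?S. \<Sum>i\<in>{1..N}. if occurs_at lam W i then g W else 0)"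
    by (simp add: sum.If_cases Int_def mult.commute)
  also have "\<dots> = (\<Sum>i\<in>{1..N}. \<Sum>W\<in>?S. if W = wd lam R i then g W else 0)"
    by (subst sum.swap) (intro sum.cong refl, auto simp: occurs_iff)
  also have "\<dots> = (\<Sum>i\<in>{1..N}. g (wd lam R i))"
    using finite_LR[of R] by (simp add: sum.delta')
  finally show ?thesis by simp
qed

lemma G_limit:
  fixes g :: "bool list \<Rightarrow> real"
  assumes "normal_seq lam"
  shows "(\<lambda>N. (\<Sum>i\<in>{1..N}. g (wd lam R i)) / real N) \<longlonglongrightarrow>
          (\<Sum>W\<in>{W :: bool list. length W = R}. g W) * (1/2)^R"
proof -
  let ?S = "{W :: bool list. length W = R}"
  have "(\<lambda>N. \<Sum>W\<in>?S. g W * (real (card {i \<in> {1..N}. occurs_at lam W i}) / real N))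
        \<longlonglongrightarrow> (\<Sum>W\<in>?S. g W * (1/2)^R)"
  proof (rule tendsto_sum, rule tendsto_mult_left)
    fix W assume "W \<in> ?S"
    thus "(\<lambda>N. real (card {i \<in> {1..N}. occurs_at lam W i}) / real N) \<longlonglongrightarrow> (1/2)^R"
      using assms unfolding normal_seq_def by auto
  qed
  moreover have "(\<lambda>N. \<Sum>W\<in>?S. g W * (real (card {i \<in> {1..N}. occurs_at lam W i}) / real N))
       = (\<lambda>N. (\<Sum>i\<in>{1..N}. g (wd lam R i)) / real N)"
    by (rule ext) (simp only: group_sum sum_divide_distrib times_divide_eq_right)
  ultimately show ?thesis by (simp add: sum_distrib_right)
qed


lemma shift_card: "card {c \<in> {1..M::nat}. P (c + s)} \<le> card {c \<in> {1..M}. P c} + s"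
proof -
  have "(\<lambda>c. c + s) ` {c \<in> {1..M::nat}. P (c + s)} \<subseteq> {c \<in> {1..M}. P c} \<union> {M<..M+s}"
    by auto
  hence "card ((\<lambda>c. c + s) ` {c \<in> {1..M::nat}. P (c + s)}) \<le> card ({c \<in> {1..M}. P c} \<union> {M<..M+s})"
    by (intro card_mono) auto
  also have "\<dots> \<le> card {c \<in> {1..M}. P c} + card {M<..M+s}" by (rule card_Un_le)
  also have "card {M<..M+s} = s" by simp
  finally show ?thesis by (simp add: card_image inj_on_def)
qed

lemma amgm_aux:
  fixes u t :: real assumes "t > 0"
  shows "u \<ge> - t/2 - u^2/(2*t)"
proof -
  have "0 \<le> (u + t)^2" by simp
  hence "0 \<le> u^2 + 2*t*u + t^2" by (simp add: power2_eq_square algebra_simps)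
  hence "- t/2 - u^2/(2*t) \<le> u"
    using assms by (simp add: field_simps power2_eq_square)
  thus ?thesis .
qed


lemma key_ineq:
  fixes lam :: "nat \<Rightarrow> bool" and q r R M :: nat and t :: real
  assumes q: "1 \<le> q" and R: "R = r * q" and t: "t > 0"
  defines "g \<equiv> (\<lambda>W::bool list. (\<Sum>s<r. Xb (W!(s*q)))^2)"
  shows "real r * (real (card {c \<in> {1..M}. lam (q*c)}) + real r) \<ge>
         real M * (real r/2 - t/2) - (\<Sum>i\<in>{1..q*M}. g (wd lam R i)) / (2*t)"
proof -
  define Sc where "Sc = (\<lambda>c. \<Sum>s<r. (if lam (q*(c+s)) then 1 else 0::real))"
  define D where "D = card {c \<in> {1..M}. lam (q*c)}"
  have a: "(\<Sum>c\<in>{1..M}. Sc c) \<le> real r * (real D + real r)"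
  proof -
    have "(\<Sum>c\<in>{1..M}. Sc c) = (\<Sum>s<r. \<Sum>c\<in>{1..M}. (if lam (q*(c+s)) then 1 else 0::real))"
      unfolding Sc_def by (rule sum.swap)
    also have "\<dots> = (\<Sum>s<r. real (card {c \<in> {1..M}. lam (q*(c+s))}))"
      by (simp add: sum.If_cases Int_def)
    also have "\<dots> \<le> (\<Sum>s<r. real D + real r)"
    proof (rule sum_mono)
      fix s assume "s \<in> {..<r}"
      have "card {c \<in> {1..M}. lam (q*(c+s))} \<le> D + s"
        unfolding D_def using shift_card[of M "\<lambda>c. lam (q*c)" s] by simp
      thus "real (card {c \<in> {1..M}. lam (q*(c+s))}) \<le> real D + real r" using \<open>s \<in> {..<r}\<close> by simp
    qed
    also have "\<dots> = real r * (real D + real r)" by simp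
    finally show ?thesis .
  qed
  have b: "(Sc c - real r/2)^2 = g (wd lam R (q*c))" for c
  proof -
    have "Sc c - real r/2 = (\<Sum>s<r. Xb (lam (q*(c+s))))"
      unfolding Sc_def Xb_def by (simp add: sum_subtractf)
    also have "\<dots> = (\<Sum>s<r. Xb (wd lam R (q*c) ! (s*q)))"
    proof (rule sum.cong[OF refl])
      fix s assume "s \<in> {..<r}"
      hence "s*q < R" using R q by simp
      thus "Xb (lam (q*(c+s))) = Xb (wd lam R (q*c) ! (s*q))"
        by (simp add: nth_wd algebra_simps)
    qed
    finally show ?thesis unfolding g_def by simp
  qed
  have c: "Sc c \<ge> real r/2 - t/2 - g (wd lam R (q*c)) / (2*t)" for c
    using amgm_aux[OF t, of "Sc c - real r/2"] b[of c] by simp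
  have d: "(\<Sum>c\<in>{1..M}. g (wd lam R (q*c))) \<le> (\<Sum>i\<in>{1..q*M}. g (wd lam R i))"
  proof -
    have "(\<Sum>c\<in>{1..M}. g (wd lam R (q*c))) = (\<Sum>i\<in>(\<lambda>c. q*c) ` {1..M}. g (wd lam R i))"
      using q by (subst sum.reindex) (auto simp: inj_on_def)
    also have "\<dots> \<le> (\<Sum>i\<in>{1..q*M}. g (wd lam R i))"
      by (rule sum_mono2) (use q in \<open>auto simp: g_def\<close>)
    finally show ?thesis .
  qed
  have "real M * (real r/2 - t/2) - (\<Sum>c\<in>{1..M}. g (wd lam R (q*c))) / (2*t)
        = (\<Sum>c\<in>{1..M}. real r/2 - t/2 - g (wd lam R (q*c)) / (2*t))"
    by (simp add: sum_subtractf sum_divide_distrib)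
  also have "\<dots> \<le> (\<Sum>c\<in>{1..M}. Sc c)" by (rule sum_mono) (rule c)
  finally have e: "real M * (real r/2 - t/2) - (\<Sum>c\<in>{1..M}. g (wd lam R (q*c))) / (2*t) \<le> real r * (real D + real r)"
    using a by linarith
  have f: "(\<Sum>c\<in>{1..M}. g (wd lam R (q*c))) / (2*t) \<le> (\<Sum>i\<in>{1..q*M}. g (wd lam R i)) / (2*t)"
    using d t by (simp add: divide_right_mono)
  show ?thesis using e f unfolding D_def by linarith
qed


lemma wall:
  fixes lam :: "nat \<Rightarrow> bool" and q :: nat and \<epsilon> :: real
  assumes nl: "normal_seq lam" and q: "1 \<le> q" and e: "0 < \<epsilon>"
  shows "eventually (\<lambda>M. (1/2 - \<epsilon>) * real M \<le> real (card {c \<in> {1..M}. lam (q*c)})) sequentially"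
proof -
  obtain m :: nat where m: "1/\<epsilon> < real m" using reals_Archimedean2 by blast
  have "0 < 1/\<epsilon>" using e by simp
  hence mpos: "real m > 0" using m by linarith
  have me: "1 / real m < \<epsilon>" using m e mpos by (simp add: field_simps)
  define r where "r = q*m*m"
  define R where "R = r*q"
  define t :: real where "t = real (q*m)"
  define g where "g = (\<lambda>W::bool list. (\<Sum>s<r. Xb (W!(s*q)))^2)"
  define G where "G = (\<lambda>N. \<Sum>i\<in>{1..N}. g (wd lam R i))"
  have qpos: "real q > 0" using q by simp
  have tpos: "t > 0" unfolding t_def using qpos mpos by simp
  have rpos: "real r > 0" unfolding r_def using qpos mpos by simp
  have gsum: "(\<Sum>W\<in>{W :: bool list. length W = R}. g W) = real r * 2^R / 4"
    unfolding g_def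
  proof (rule sq_sum)
    show "inj_on (\<lambda>s. s * q) {..<r}" using q by (auto simp: inj_on_def)
    fix s assume "s < r" thus "s * q < R" unfolding R_def using q by simp
  qed
  have lim1: "(\<lambda>N. G N / real N) \<longlonglongrightarrow> real r / 4"
    using G_limit[OF nl, of g R] unfolding G_def gsum
    by (simp add: power_one_over field_simps)
  have sm: "strict_mono (\<lambda>M. q * M)" using q by (auto simp: strict_mono_def)
  have lim2: "(\<lambda>M. G (q*M) / real (q*M)) \<longlonglongrightarrow> real r / 4"
    using LIMSEQ_subseq_LIMSEQ[OF lim1 sm] by (simp add: o_def)
  define h where "h = (\<lambda>M::nat. 1/2 - t/(2*r) - real r/real M - (q/(2*t*r)) * (G (q*M) / real (q*M)))"
  have limh: "h \<longlonglongrightarrow> 1/2 - t/(2*r) - 0 - (q/(2*t*r)) * (real r/4)"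
    unfolding h_def by (intro tendsto_intros lim2)
  have L: "1/2 - t/(2*r) - 0 - (q/(2*t*r)) * (real r/4) = 1/2 - 5/(8*real m)"
    unfolding t_def r_def using qpos mpos by (simp add: field_simps)
  have L2: "1/2 - 5/(8*real m) > 1/2 - \<epsilon>" using me mpos by (simp add: field_simps)
  have ev1: "eventually (\<lambda>M. h M > 1/2 - \<epsilon>) sequentially"
    using order_tendstoD(1)[OF limh] L L2 by simp
  have ev2: "eventually (\<lambda>M. M \<ge> (1::nat)) sequentially" by (rule eventually_ge_at_top)
  show ?thesis using ev1 ev2
  proof eventually_elim
    case (elim M)
    have Mpos: "real M > 0" using elim by simp
    define D where "D = real (card {c \<in> {1..M}. lam (q*c)})"
    have k: "real r * (D + real r) \<ge> real M * (real r/2 - t/2) - G (q*M) / (2*t)"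
      using key_ineq[OF q R_def tpos, where lam=lam and M=M] unfolding D_def G_def g_def by simp
    have hM: "h M = 1/2 - t/(2*r) - real r/real M - G (q*M) / (2*t*r*M)"
      unfolding h_def using qpos Mpos by (simp add: field_simps)
    have "h M * (real r * real M) = real M * (real r/2 - t/2) - G (q*M) / (2*t) - real r * real r"
      unfolding hM using rpos Mpos tpos by (simp add: field_simps)
    also have "\<dots> \<le> real r * D" using k by (simp add: algebra_simps)
    finally have "h M * (real r * real M) \<le> real r * D" .
    hence "real r * (h M * real M) \<le> real r * D" by (simp add: algebra_simps)
    hence "h M * real M \<le> D" using rpos by (simp add: mult_le_cancel_left_pos)
    moreover have "(1/2 - \<epsilon>) * real M \<le> h M * real M" using elim(1) Mpos by simp
    ultimately show ?case unfolding D_def by linarith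
  qed
qed

theorem mainTheorem5:
  fixes A :: "nat set"
  assumes "A \<subseteq> {1..}" and "normal_set A"
  shows "\<exists>x\<in>A. \<exists>y\<in>A. \<exists>z\<in>A. x \<noteq> y \<and> x * y = z ^ 2"
proof (rule ccontr)
  assume no: "\<not> (\<exists>x\<in>A. \<exists>y\<in>A. \<exists>z\<in>A. x \<noteq> y \<and> x * y = z ^ 2)"
  have nl: "normal_seq (\<lambda>i. i \<in> A)" using assms(2) unfolding normal_set_def .
  define P where "P = (\<lambda>k c. (2::nat)^k * c \<in> A)"
  have "\<forall>k\<in>{..<17::nat}. eventually (\<lambda>M. (1/2 - 1/68) * real M \<le> real (card {c \<in> {1..M}. P k c})) sequentially"
  proof
    fix k :: nat
    show "eventually (\<lambda>M. (1/2 - 1/68) * real M \<le> real (card {c \<in> {1..M}. P k c})) sequentially"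
      using wall[OF nl, of "2^k" "1/68"] unfolding P_def by simp
  qed
  hence "eventually (\<lambda>M. \<forall>k\<in>{..<17::nat}. (1/2 - 1/68) * real M \<le> real (card {c \<in> {1..M}. P k c})) sequentially"
    by (simp add: eventually_ball_finite)
  moreover have "eventually (\<lambda>M. M \<ge> (1::nat)) sequentially" by (rule eventually_ge_at_top)
  ultimately have "eventually (\<lambda>M. M \<ge> 1 \<and> (\<forall>k\<in>{..<17::nat}. (1/2 - 1/68) * real M \<le> real (card {c \<in> {1..M}. P k c}))) sequentially"
    by (simp add: eventually_conj)
  then obtain N where N: "\<And>M. M \<ge> N \<Longrightarrow> M \<ge> 1 \<and> (\<forall>k\<in>{..<17::nat}. (1/2 - 1/68) * real M \<le> real (card {c \<in> {1..M}. P k c}))"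
    unfolding eventually_sequentially by blast
  define M where "M = N"
  have M1: "M \<ge> 1" and MP: "\<forall>k\<in>{..<17::nat}. (1/2 - 1/68) * real M \<le> real (card {c \<in> {1..M}. P k c})"
    using N[of M] unfolding M_def by auto
  have lower: "17 * ((1/2 - 1/68) * real M) \<le> (\<Sum>k<17. real (card {c \<in> {1..M}. P k c}))"
  proof -
    have "(\<Sum>k<(17::nat). (1/2 - 1/68) * real M) \<le> (\<Sum>k<17. real (card {c \<in> {1..M}. P k c}))"
      by (rule sum_mono) (use MP in auto)
    thus ?thesis by simp
  qed
  have apf: "apfree {k \<in> {..<17}. P k c}" if c: "c \<in> {1..M}" for c
    unfolding apfree_def
  proof (intro allI impI)
    fix a d :: nat
    assume d: "0 < d" and h1: "a \<in> {k \<in> {..<17}. P k c}" and h2: "a + d \<in> {k \<in> {..<17}. P k c}"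
      and h3: "a + 2*d \<in> {k \<in> {..<17}. P k c}"
    define x where "x = 2^a * c"
    define z where "z = 2^(a+d) * c"
    define y where "y = 2^(a+2*d) * c"
    have xA: "x \<in> A" and zA: "z \<in> A" and yA: "y \<in> A" using h1 h2 h3 unfolding x_def y_def z_def P_def by auto
    have cpos: "c > 0" using c by simp
    have "(2::nat)^a < 2^(a+2*d)" using d by (intro power_strict_increasing) auto
    hence "x < y" unfolding x_def y_def using cpos by simp
    hence xy: "x \<noteq> y" by simp
    have "x * y = z^2" unfolding x_def y_def z_def
      by (simp add: power_add power_mult power2_eq_square ac_simps)
    thus False using no xA yA zA xy by blast
  qed
  have upper: "(\<Sum>k<17. card {c \<in> {1..M}. P k c}) \<le> 8 * M"
  proof -
    have "(\<Sum>k<17. card {c \<in> {1..M}. P k c}) = (\<Sum>k<(17::nat). \<Sum>c\<in>{1..M}. if P k c then 1 else (0::nat))"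
      by (simp add: sum.inter_filter[symmetric])
    also have "\<dots> = (\<Sum>c\<in>{1..M}. \<Sum>k<(17::nat). if P k c then 1 else (0::nat))"
      by (rule sum.swap)
    also have "\<dots> = (\<Sum>c\<in>{1..M}. card {k \<in> {..<17}. P k c})"
      by (simp add: sum.inter_filter[symmetric])
    also have "\<dots> \<le> (\<Sum>c\<in>{1..M}. 8)"
    proof (rule sum_mono)
      fix c assume "c \<in> {1..M}"
      show "card {k \<in> {..<17}. P k c} \<le> 8" by (rule apfree17[OF apf[OF \<open>c \<in> {1..M}\<close>]]) auto
    qed
    also have "\<dots> = 8 * M" by simp
    finally show ?thesis .
  qed
  have u2: "real (\<Sum>k<17. card {c \<in> {1..M}. P k c}) \<le> real (8 * M)"
    using upper by (rule of_nat_mono)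
  have u3: "(\<Sum>k<17. real (card {c \<in> {1..M}. P k c})) \<le> 8 * real M"
    using u2 by (simp only: of_nat_sum of_nat_mult of_nat_numeral)
  have l2: "17 * ((1/2 - 1/68) * real M) = (33/4) * real M" by simp
  have "real M \<ge> 1" using M1 by simp
  thus False using lower u3 l2 by linarith
qed

end
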